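(* In the FitzHugh–Nagumo setup, suppose $0<\epsilon<\frac{c^4}{16}$. Let $\lambda\ge0$ be a real eigenvalue of $L_\epsilon$ and $P=(p,q)$ a corresponding nonzero real-valued eigenfunction. Then $$\int_{-\infty}^{\infty}e^{cz}\Big(p(z)^2-\frac{q(z)^2}{\epsilon}\Big)\,dz>0.$$
   Context: FitzHugh–Nagumo setup. Fix $0<a<1/2$, $\gamma>0$, $\epsilon>0$, and $g(u)=u(1-u)(u-a)$. Consider $u_t=u_{xx}+g(u)-v$, $v_t=v_{xx}+\epsilon(u-\gamma v)$. Let $c<0$ and let $(\hat u,\hat v)(z)$, $z=x-ct$, be a traveling pulse: a solution of $\hat u''+c\hat u'+g(\hat u)-\hat v=0$, $\hat v''+c\hat v'+\epsilon(\hat u-\gamma\hat v)=0$ tending to $0$ exponentially (with derivatives) as $z\to\pm\infty$. Linearized operator: $L_\epsilon=\partial_z^2+c\partial_z+\begin{pmatrix}g'(\hat u)&-1\\ \epsilon&-\epsilon\gamma\end{pmatrix}$; $\lambda$ is an eigenvalue if $L_\epsilon P=\lambda P$ has a nonzero bounded uniformly continuous solution $P$ (such eigenfunctions decay exponentially at both ends, fast enough that the integral above converges). *)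

theory Defs
  imports "HOL-Analysis.Analysis"
begin

definition fhn_g :: "real \<Rightarrow> real \<Rightarrow> real" where
  "fhn_g a u = u * (1 - u) * (u - a)"

definition fhn_pulse ::
  "real \<Rightarrow> real \<Rightarrow> real \<Rightarrow> real \<Rightarrow>
   (real \<Rightarrow> real) \<Rightarrow> (real \<Rightarrow> real) \<Rightarrow> (real \<Rightarrow> real) \<Rightarrow>
   (real \<Rightarrow> real) \<Rightarrow> (real \<Rightarrow> real) \<Rightarrow> (real \<Rightarrow> real) \<Rightarrow> bool" where
  "fhn_pulse a \<gamma> \<epsilon> c uh uh' uh'' vh vh' vh'' \<longleftrightarrow>
     (\<forall>z. (uh has_real_derivative uh' z) (at z)) \<and>
     (\<forall>z. (uh' has_real_derivative uh'' z) (at z)) \<and>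
     (\<forall>z. (vh has_real_derivative vh' z) (at z)) \<and>
     (\<forall>z. (vh' has_real_derivative vh'' z) (at z)) \<and>
     (\<forall>z. uh'' z + c * uh' z + fhn_g a (uh z) - vh z = 0) \<and>
     (\<forall>z. vh'' z + c * vh' z + \<epsilon> * (uh z - \<gamma> * vh z) = 0) \<and>
     (\<exists>C K. K > 0 \<and> (\<forall>z. \<bar>uh z\<bar> + \<bar>uh' z\<bar> + \<bar>vh z\<bar> + \<bar>vh' z\<bar>
                              \<le> C * exp (- K * \<bar>z\<bar>)))"

text \<open>(p,q) (with derivatives) is a bounded uniformly continuous nonzero real solution
  of L_eps P = lambda P, where
  L_eps = d^2/dz^2 + c d/dz + [[g'(uh), -1], [eps, -eps*gamma]].\<close>
definition fhn_eigenfunction ::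
  "real \<Rightarrow> real \<Rightarrow> real \<Rightarrow> real \<Rightarrow> (real \<Rightarrow> real) \<Rightarrow> real \<Rightarrow>
   (real \<Rightarrow> real) \<Rightarrow> (real \<Rightarrow> real) \<Rightarrow> (real \<Rightarrow> real) \<Rightarrow>
   (real \<Rightarrow> real) \<Rightarrow> (real \<Rightarrow> real) \<Rightarrow> (real \<Rightarrow> real) \<Rightarrow> bool" where
  "fhn_eigenfunction a \<gamma> \<epsilon> c uh lam p p' p'' q q' q'' \<longleftrightarrow>
     (\<forall>z. (p has_real_derivative p' z) (at z)) \<and>
     (\<forall>z. (p' has_real_derivative p'' z) (at z)) \<and>
     (\<forall>z. (q has_real_derivative q' z) (at z)) \<and>
     (\<forall>z. (q' has_real_derivative q'' z) (at z)) \<and>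
     (\<forall>z. p'' z + c * p' z + deriv (fhn_g a) (uh z) * p z - q z = lam * p z) \<and>
     (\<forall>z. q'' z + c * q' z + \<epsilon> * p z - \<epsilon> * \<gamma> * q z = lam * q z) \<and>
     bounded (range p) \<and> bounded (range q) \<and>
     uniformly_continuous_on UNIV p \<and> uniformly_continuous_on UNIV q \<and>
     (\<exists>z. p z \<noteq> 0 \<or> q z \<noteq> 0)"

end

theory Submission
  imports Defs "HOL-Real_Asymp.Real_Asymp"
begin


lemma integrable_exp_abs:
  fixes k :: real assumes k: "k > 0"
  shows "integrable lborel (\<lambda>x. exp (- k * \<bar>x\<bar>))"
proof -
  let ?g1 = "\<lambda>x::real. indicator {0..} x *\<^sub>R exp (- k * x)"
  have "(\<lambda>x. exp (- k * x)) absolutely_integrable_on {0..}"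
    by (intro nonnegative_absolutely_integrable_1 integrable_on_exp_minus_to_infinity k) auto
  then have "integrable lebesgue ?g1" unfolding set_integrable_def .
  then have i1: "integrable lborel ?g1"
    by (subst (asm) integrable_completion)
       (auto intro!: borel_measurable_continuous_on_indicator continuous_intros)
  have i2: "integrable lborel (\<lambda>x. ?g1 (0 + (-1) * x))"
    using lborel_integrable_real_affine[OF i1, of "-1" 0] by simp
  have "integrable lborel (\<lambda>x. ?g1 x + ?g1 (0 + (-1) * x))"
    using i1 i2 by (rule Bochner_Integration.integrable_add)
  then show ?thesis
  proof (rule Bochner_Integration.integrable_bound)
    show "(\<lambda>x. exp (- k * \<bar>x\<bar>)) \<in> borel_measurable lborel"
      by (auto intro!: borel_measurable_continuous_onI continuous_intros)
    show "AE x in lborel. norm (exp (- k * \<bar>x\<bar>)) \<le> norm (?g1 x + ?g1 (0 + (-1) * x))"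
      by (auto simp: indicator_def)
  qed
qed



lemma max_principle:
  fixes w w' w'' :: "real \<Rightarrow> real"
  assumes d1: "\<And>z. (w has_real_derivative w' z) (at z)"
    and d2: "\<And>z. (w' has_real_derivative w'' z) (at z)"
    and TZ: "T \<le> Z" and wT: "w T \<le> 0" and wZ: "w Z \<le> 0"
    and ineq: "\<And>z. T \<le> z \<Longrightarrow> z \<le> Z \<Longrightarrow> w'' z + c * w' z \<ge> d * w z"
    and dpos: "d > 0"
    and z: "T \<le> z" "z \<le> Z"
  shows "w z \<le> 0"
proof (rule ccontr)
  assume "\<not> w z \<le> 0"
  hence wz: "w z > 0" by simp
  have cont: "continuous_on {T..Z} w"
    using d1 by (meson DERIV_isCont continuous_at_imp_continuous_on)
  obtain x where x: "x \<in> {T..Z}" and xmax: "\<And>y. y \<in> {T..Z} \<Longrightarrow> w y \<le> w x"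
    using continuous_attains_sup[OF compact_Icc _ cont] TZ by auto
  have wx: "w x > 0" using xmax[of z] z wz by auto
  have xT: "T < x" using x wx wT by (cases "x = T") auto
  have xZ: "x < Z" using x wx wZ by (cases "x = Z") auto
  have "w' x = 0"
  proof (rule DERIV_local_max[OF d1[of x], of "min (x - T) (Z - x)"])
    show "0 < min (x - T) (Z - x)" using xT xZ by simp
    show "\<forall>y. \<bar>x - y\<bar> < min (x - T) (Z - x) \<longrightarrow> w y \<le> w x"
      by (intro allI impI xmax) auto
  qed
  moreover have "w'' x \<ge> d * w x" using ineq[of x] xT xZ \<open>w' x = 0\<close> by simp
  hence "w'' x > 0" using dpos wx by (smt (verit) mult_pos_pos)
  then obtain e where e: "e > 0" and ee: "\<And>h. h > 0 \<Longrightarrow> h < e \<Longrightarrow> w' x < w' (x + h)"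
    using DERIV_pos_inc_right[OF d2[of x]] by blast
  define h where "h = min (e/2) ((Z - x)/2)"
  have h: "h > 0" "h < e" "x + h \<le> Z" using e xZ unfolding h_def by (auto simp: min_def field_simps)
  obtain \<xi> where xi: "x < \<xi>" "\<xi> < x + h" and eq: "w (x + h) - w x = (x + h - x) * w' \<xi>"
    using MVT2[of x "x + h" w w'] d1 h by auto
  have "w' \<xi> > 0" using ee[of "\<xi> - x"] xi h \<open>w' x = 0\<close> by auto
  hence "w (x + h) > w x" using eq h by (smt (verit) mult_pos_pos)
  moreover have "w (x + h) \<le> w x" using xmax[of "x + h"] h xT by auto
  ultimately show False by simp
qed



lemma decay_left:
  fixes E E' E'' :: "real \<Rightarrow> real"
  assumes d1: "\<And>z. (E has_real_derivative E' z) (at z)"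
    and d2: "\<And>z. (E' has_real_derivative E'' z) (at z)"
    and Enn: "\<And>z. E z \<ge> 0" and EB: "\<And>z. E z \<le> B"
    and dpos: "\<delta> > 0"
    and ineq: "\<And>z. z \<le> Z0 \<Longrightarrow> E'' z + c * E' z \<ge> 2 * \<delta> * E z"
    and t: "t\<^sup>2 + c * t = 2 * \<delta>" and s: "s\<^sup>2 + c * s = 2 * \<delta>" and sneg: "s < 0"
    and z: "z \<le> Z0"
  shows "E z \<le> E Z0 * exp (t * (z - Z0))"
proof -
  have key: "E z - E Z0 * exp (t * (z - Z0)) \<le> \<eta> * exp (s * (z - Z0))" if eta: "\<eta> > 0" for \<eta>
  proof -
    define \<phi> where "\<phi> = (\<lambda>y. E Z0 * exp (t * (y - Z0)) + \<eta> * exp (s * (y - Z0)))"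
    define \<phi>' where "\<phi>' = (\<lambda>y. E Z0 * (t * exp (t * (y - Z0))) + \<eta> * (s * exp (s * (y - Z0))))"
    define \<phi>'' where "\<phi>'' = (\<lambda>y. E Z0 * (t * (t * exp (t * (y - Z0)))) + \<eta> * (s * (s * exp (s * (y - Z0)))))"
    have p1: "(\<phi> has_real_derivative \<phi>' y) (at y)" for y
      unfolding \<phi>_def \<phi>'_def by (auto intro!: derivative_eq_intros)
    have p2: "(\<phi>' has_real_derivative \<phi>'' y) (at y)" for y
      unfolding \<phi>'_def \<phi>''_def by (auto intro!: derivative_eq_intros)
    have phieq: "\<phi>'' y + c * \<phi>' y = 2 * \<delta> * \<phi> y" for y
    proof -
      have "\<phi>'' y + c * \<phi>' y = E Z0 * exp (t * (y - Z0)) * (t\<^sup>2 + c * t) + \<eta> * exp (s * (y - Z0)) * (s\<^sup>2 + c * s)"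
        unfolding \<phi>''_def \<phi>'_def by (simp add: power2_eq_square algebra_simps)
      also have "\<dots> = 2 * \<delta> * \<phi> y" unfolding t s \<phi>_def by (simp add: algebra_simps)
      finally show ?thesis .
    qed
    define T where "T = min z (Z0 + ln (\<bar>B\<bar> / \<eta> + 1) / s)"
    have Tz: "T \<le> z" by (simp add: T_def)
    have "T - Z0 \<le> ln (\<bar>B\<bar> / \<eta> + 1) / s" by (simp add: T_def)
    hence "s * (T - Z0) \<ge> ln (\<bar>B\<bar> / \<eta> + 1)"
      using sneg by (simp add: pos_le_divide_eq neg_le_divide_eq mult.commute)
    hence "exp (s * (T - Z0)) \<ge> \<bar>B\<bar> / \<eta> + 1"
      using eta by (smt (verit) divide_nonneg_pos exp_ln_iff abs_ge_zero exp_le_cancel_iff)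
    hence "\<eta> * exp (s * (T - Z0)) \<ge> \<eta> * (\<bar>B\<bar> / \<eta> + 1)"
      using eta by (simp add: mult_left_mono)
    also have "\<eta> * (\<bar>B\<bar> / \<eta> + 1) = \<bar>B\<bar> + \<eta>" using eta by (simp add: field_simps)
    finally have big: "\<eta> * exp (s * (T - Z0)) \<ge> \<bar>B\<bar> + \<eta>" .
    have Enn0: "E Z0 * exp (t * (T - Z0)) \<ge> 0" using Enn[of Z0] by simp
    have "(\<lambda>y. E y - \<phi> y) z \<le> 0"
    proof (rule max_principle[where w = "\<lambda>y. E y - \<phi> y" and w' = "\<lambda>y. E' y - \<phi>' y" and w'' = "\<lambda>y. E'' y - \<phi>'' y"
          and c = c and d = "2 * \<delta>" and T = T and Z = Z0])
      show "\<And>y. ((\<lambda>y. E y - \<phi> y) has_real_derivative E' y - \<phi>' y) (at y)"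
        using d1 p1 by (auto intro!: derivative_eq_intros)
      show "\<And>y. ((\<lambda>y. E' y - \<phi>' y) has_real_derivative E'' y - \<phi>'' y) (at y)"
        using d2 p2 by (auto intro!: derivative_eq_intros)
      show "T \<le> Z0" using Tz z by simp
      show "E T - \<phi> T \<le> 0" using EB[of T] big Enn0 eta abs_ge_self[of B] unfolding \<phi>_def by linarith
      show "E Z0 - \<phi> Z0 \<le> 0" unfolding \<phi>_def using eta by simp
      show "2 * \<delta> * (E y - \<phi> y) \<le> E'' y - \<phi>'' y + c * (E' y - \<phi>' y)" if "T \<le> y" "y \<le> Z0" for y
        using ineq[of y] that phieq[of y] by (simp add: algebra_simps)
      show "0 < 2 * \<delta>" using dpos by simp
      show "T \<le> z" "z \<le> Z0" using Tz z by auto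
    qed
    thus ?thesis unfolding \<phi>_def by simp
  qed
  show ?thesis
  proof (rule ccontr)
    assume "\<not> ?thesis"
    hence pos: "E z - E Z0 * exp (t * (z - Z0)) > 0" by simp
    define \<eta> where "\<eta> = (E z - E Z0 * exp (t * (z - Z0))) / (2 * exp (s * (z - Z0)))"
    have "\<eta> > 0" using pos by (simp add: \<eta>_def)
    from key[OF this] have "E z - E Z0 * exp (t * (z - Z0)) \<le> (E z - E Z0 * exp (t * (z - Z0))) / 2"
      by (simp add: \<eta>_def)
    thus False using pos by simp
  qed
qed



lemma integral_pos_cont:
  fixes h :: "real \<Rightarrow> real"
  assumes cont: "continuous_on UNIV h" and nn: "\<And>x. h x \<ge> 0"
    and int: "integrable lborel h" and pos: "h x0 > 0"
  shows "integral\<^sup>L lborel h > 0"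
proof -
  have "isCont h x0" using cont by (simp add: continuous_on_eq_continuous_at)
  then obtain d where d: "d > 0" and dd: "\<And>y. dist y x0 < d \<Longrightarrow> dist (h y) (h x0) < h x0 / 2"
    using pos unfolding continuous_at_eps_delta by (metis half_gt_zero)
  let ?I = "{x0 - d/2 .. x0 + d/2}"
  have lb: "h x0 / 2 * indicator ?I x \<le> h x" for x
  proof (cases "x \<in> ?I")
    case True
    hence "dist x x0 < d" using d by (auto simp: dist_real_def)
    from dd[OF this] have "h x > h x0 / 2" unfolding dist_real_def by linarith
    thus ?thesis using True by simp
  next
    case False thus ?thesis using nn[of x] by simp
  qed
  have "integral\<^sup>L lborel (\<lambda>x. h x0 / 2 * indicator ?I x) \<le> integral\<^sup>L lborel h"
  proof (intro integral_mono int lb)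
    have "integrable lborel (\<lambda>x. indicator ?I x :: real)"
      using d by (intro integrable_real_indicator) (auto simp: emeasure_lborel_Icc)
    thus "integrable lborel (\<lambda>x. h x0 / 2 * indicator ?I x)"
      by (rule Bochner_Integration.integrable_mult_right)
  qed
  moreover have "integral\<^sup>L lborel (\<lambda>x. h x0 / 2 * indicator ?I x) = h x0 / 2 * d"
    using d by simp
  moreover have "h x0 / 2 * d > 0" using pos d by simp
  ultimately show ?thesis by linarith
qed

lemma deriv_fhn_g: "deriv (fhn_g a) u = - 3 * u\<^sup>2 + 2 * (1 + a) * u - a"
proof -
  have "(fhn_g a has_real_derivative (- 3 * u\<^sup>2 + 2 * (1 + a) * u - a)) (at u)"
  proof -
    have "((\<lambda>u. - (u^3) + (1 + a) * u\<^sup>2 - a * u) has_real_derivative (- 3 * u\<^sup>2 + 2 * (1 + a) * u - a)) (at u)"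
      by (auto intro!: derivative_eq_intros simp: power2_eq_square)
    moreover have "(\<lambda>u. - (u^3) + (1 + a) * u\<^sup>2 - a * u) = fhn_g a"
      by (auto simp: fhn_g_def fun_eq_iff algebra_simps power2_eq_square power3_eq_cube)
    ultimately show ?thesis by simp
  qed
  thus ?thesis by (rule DERIV_imp_deriv)
qed



theorem theorem5p3:
  fixes a \<gamma> \<epsilon> c lam :: real
    and uh uh' uh'' vh vh' vh'' p p' p'' q q' q'' :: "real \<Rightarrow> real"
  assumes "0 < a" "a < 1/2" "\<gamma> > 0" "\<epsilon> > 0" "c < 0"
    and "\<epsilon> < c ^ 4 / 16"
    and "fhn_pulse a \<gamma> \<epsilon> c uh uh' uh'' vh vh' vh''"
    and "lam \<ge> 0"
    and "fhn_eigenfunction a \<gamma> \<epsilon> c uh lam p p' p'' q q' q''"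
  shows "(\<integral>z. exp (c * z) * ((p z)\<^sup>2 - (q z)\<^sup>2 / \<epsilon>) \<partial>lborel) > 0"
proof -
  note a0 = assms(1) and a12 = assms(2) and g0 = assms(3) and e0 = assms(4) and c0 = assms(5)
    and esmall = assms(6) and lam0 = assms(8)
  from assms(9) have
    dp: "\<And>z. (p has_real_derivative p' z) (at z)" and
    dp': "\<And>z. (p' has_real_derivative p'' z) (at z)" and
    dq: "\<And>z. (q has_real_derivative q' z) (at z)" and
    dq': "\<And>z. (q' has_real_derivative q'' z) (at z)" and
    eqp: "\<And>z. p'' z + c * p' z + deriv (fhn_g a) (uh z) * p z - q z = lam * p z" and
    eqq: "\<And>z. q'' z + c * q' z + \<epsilon> * p z - \<epsilon> * \<gamma> * q z = lam * q z" and
    bp: "bounded (range p)" and bq: "bounded (range q)" and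
    nz: "\<exists>z. p z \<noteq> 0 \<or> q z \<noteq> 0"
    unfolding fhn_eigenfunction_def by blast+
  from assms(7) obtain C K where K: "K > 0" and
    uhb: "\<And>z. \<bar>uh z\<bar> + \<bar>uh' z\<bar> + \<bar>vh z\<bar> + \<bar>vh' z\<bar> \<le> C * exp (- K * \<bar>z\<bar>)"
    unfolding fhn_pulse_def by blast
  obtain Bp where Bp: "\<And>z. \<bar>p z\<bar> \<le> Bp" using bp unfolding bounded_iff by fastforce
  obtain Bq where Bq: "\<And>z. \<bar>q z\<bar> \<le> Bq" using bq unfolding bounded_iff by fastforce
  have cp: "isCont p z" "isCont q z" "isCont p' z" "isCont q' z" for z
    using DERIV_isCont[OF dp[of z]] DERIV_isCont[OF dq[of z]] DERIV_isCont[OF dp'[of z]]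
      DERIV_isCont[OF dq'[of z]] by auto
  have cpo: "continuous_on UNIV p" "continuous_on UNIV q" "continuous_on UNIV p'" "continuous_on UNIV q'"
    using cp by (auto intro!: continuous_at_imp_continuous_on)

  define Z0 where "Z0 = min 0 (ln (a / (6 * (\<bar>C\<bar> + 1))) / K)"
  have Z0neg: "Z0 \<le> 0" by (simp add: Z0_def)
  have gle: "deriv (fhn_g a) (uh z) \<le> - a / 2" if z: "z \<le> Z0" for z
  proof -
    have "K * z \<le> K * Z0" using z K by simp
    also have "K * Z0 \<le> K * (ln (a / (6 * (\<bar>C\<bar> + 1))) / K)"
      using K by (intro mult_left_mono) (auto simp: Z0_def)
    also have "\<dots> = ln (a / (6 * (\<bar>C\<bar> + 1)))" using K by simp
    finally have "exp (K * z) \<le> a / (6 * (\<bar>C\<bar> + 1))"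
      using a0 by (smt (verit) divide_pos_pos exp_le_cancel_iff exp_ln abs_ge_zero)
    hence "(\<bar>C\<bar> + 1) * exp (K * z) \<le> a / 6"
      by (simp add: field_simps)
    moreover have "\<bar>uh z\<bar> \<le> C * exp (K * z)"
    proof -
      have "- K * \<bar>z\<bar> = K * z" using z Z0neg by simp
      thus ?thesis using uhb[of z] by (smt (verit) abs_ge_zero)
    qed
    moreover have "C * exp (K * z) \<le> (\<bar>C\<bar> + 1) * exp (K * z)"
      by (intro mult_right_mono) auto
    ultimately have u: "\<bar>uh z\<bar> \<le> a / 6" by linarith
    have "- 3 * (uh z)\<^sup>2 + 2 * (1 + a) * uh z - a \<le> - a / 2"
    proof -
      have "2 * (1 + a) * uh z \<le> 2 * (1 + a) * \<bar>uh z\<bar>" using a0 by (intro mult_left_mono) auto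
      also have "\<dots> \<le> 2 * (1 + a) * (a / 6)" using a0 u by (intro mult_left_mono) auto
      also have "\<dots> \<le> a / 2" using a0 a12 by (simp add: field_simps)
      finally show ?thesis using zero_le_power2[of "uh z"] by linarith
    qed
    thus ?thesis by (simp add: deriv_fhn_g)
  qed

  define \<delta> where "\<delta> = min (a / 2) (\<epsilon> * \<gamma>)"
  have dpos: "\<delta> > 0" using a0 e0 g0 by (simp add: \<delta>_def)
  define E where "E = (\<lambda>z. \<epsilon> * (p z)\<^sup>2 + (q z)\<^sup>2)"
  define E' where "E' = (\<lambda>z. 2 * \<epsilon> * p z * p' z + 2 * q z * q' z)"
  define E'' where "E'' = (\<lambda>z. 2 * \<epsilon> * ((p' z)\<^sup>2 + p z * p'' z) + 2 * ((q' z)\<^sup>2 + q z * q'' z))"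
  have dE: "(E has_real_derivative E' z) (at z)" for z
    unfolding E_def E'_def using dp dq by (auto intro!: derivative_eq_intros)
  have dE': "(E' has_real_derivative E'' z) (at z)" for z
    unfolding E'_def E''_def using dp dq dp' dq'
    by (auto intro!: derivative_eq_intros simp: power2_eq_square algebra_simps)
  have Enn: "E z \<ge> 0" for z using e0 by (simp add: E_def)
  have EB: "E z \<le> \<epsilon> * Bp\<^sup>2 + Bq\<^sup>2" for z
  proof -
    have "(p z)\<^sup>2 \<le> Bp\<^sup>2" using Bp[of z] by (metis abs_ge_zero power2_abs power_mono)
    moreover have "(q z)\<^sup>2 \<le> Bq\<^sup>2" using Bq[of z] by (metis abs_ge_zero power2_abs power_mono)
    ultimately show ?thesis using e0 unfolding E_def by (intro add_mono mult_left_mono) auto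
  qed
  have Eineq: "E'' z + c * E' z \<ge> 2 * \<delta> * E z" if z: "z \<le> Z0" for z
  proof -
    have pp: "p'' z + c * p' z = lam * p z - deriv (fhn_g a) (uh z) * p z + q z" using eqp[of z] by simp
    have qq: "q'' z + c * q' z = lam * q z - \<epsilon> * p z + \<epsilon> * \<gamma> * q z" using eqq[of z] by simp
    have "E'' z + c * E' z = 2 * \<epsilon> * (p' z)\<^sup>2 + 2 * (q' z)\<^sup>2 + 2 * \<epsilon> * p z * (p'' z + c * p' z)
        + 2 * q z * (q'' z + c * q' z)"
      unfolding E''_def E'_def by (simp add: algebra_simps)
    also have "\<dots> = 2 * \<epsilon> * (p' z)\<^sup>2 + 2 * (q' z)\<^sup>2 + 2 * \<epsilon> * (lam - deriv (fhn_g a) (uh z)) * (p z)\<^sup>2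
        + 2 * (lam + \<epsilon> * \<gamma>) * (q z)\<^sup>2"
      unfolding pp qq by (simp add: algebra_simps power2_eq_square)
    also have "\<dots> \<ge> 2 * \<epsilon> * (lam - deriv (fhn_g a) (uh z)) * (p z)\<^sup>2 + 2 * (lam + \<epsilon> * \<gamma>) * (q z)\<^sup>2"
      using e0 by simp
    moreover have "2 * \<epsilon> * (lam - deriv (fhn_g a) (uh z)) * (p z)\<^sup>2 \<ge> 2 * \<epsilon> * \<delta> * (p z)\<^sup>2"
    proof -
      have "lam - deriv (fhn_g a) (uh z) \<ge> \<delta>" using gle[OF z] lam0 by (simp add: \<delta>_def)
      thus ?thesis using e0 by (intro mult_right_mono) auto
    qed
    moreover have "2 * (lam + \<epsilon> * \<gamma>) * (q z)\<^sup>2 \<ge> 2 * \<delta> * (q z)\<^sup>2"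
      using lam0 by (intro mult_right_mono) (auto simp: \<delta>_def)
    ultimately show ?thesis unfolding E_def by (simp add: algebra_simps)
  qed
  define sq where "sq = sqrt (c\<^sup>2 + 8 * \<delta>)"
  have sq2: "sq\<^sup>2 = c\<^sup>2 + 8 * \<delta>" unfolding sq_def using dpos by simp
  have sqgt: "sq > - c"
  proof -
    have "sqrt (c\<^sup>2) < sq" unfolding sq_def using dpos by (intro real_sqrt_less_mono) simp
    thus ?thesis using c0 by simp
  qed
  define t where "t = (- c + sq) / 2"
  define s where "s = (- c - sq) / 2"
  have teq: "t\<^sup>2 + c * t = 2 * \<delta>" unfolding t_def using sq2 by (simp add: power2_eq_square field_simps)
  have seq: "s\<^sup>2 + c * s = 2 * \<delta>" unfolding s_def using sq2 by (simp add: power2_eq_square field_simps)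
  have sneg: "s < 0" unfolding s_def using sqgt c0 by simp
  define \<rho> where "\<rho> = t + c"
  have rpos: "\<rho> > 0" unfolding \<rho>_def t_def using sqgt by (simp add: field_simps)
  have Edecay: "E z \<le> E Z0 * exp (t * (z - Z0))" if "z \<le> Z0" for z
    by (rule decay_left[OF dE dE' Enn EB dpos Eineq teq seq sneg that])
  define \<kappa> where "\<kappa> = min \<rho> (- c)"
  have kpos: "\<kappa> > 0" using rpos c0 by (simp add: \<kappa>_def)
  define BE where "BE = \<epsilon> * Bp\<^sup>2 + Bq\<^sup>2"
  have BE0: "BE \<ge> 0" using Enn[of 0] EB[of 0] by (simp add: BE_def)
  define M1 where "M1 = E Z0 * exp (- t * Z0)"
  have M10: "M1 \<ge> 0" using Enn[of Z0] by (simp add: M1_def)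
  define M where "M = M1 + BE * exp ((c - \<kappa>) * Z0)"
  have M0: "M \<ge> 0" using M10 BE0 by (simp add: M_def)
  have Wb: "exp (c * z) * E z \<le> M * exp (- \<kappa> * \<bar>z\<bar>)" for z
  proof (cases "z \<le> Z0")
    case True
    have "exp (c * z) * E z \<le> exp (c * z) * (E Z0 * exp (t * (z - Z0)))"
      using Edecay[OF True] by (intro mult_left_mono) auto
    also have "\<dots> = E Z0 * (exp (c * z) * exp (t * (z - Z0)))" by (simp add: ac_simps)
    also have "exp (c * z) * exp (t * (z - Z0)) = exp (- t * Z0) * exp (\<rho> * z)"
      unfolding mult_exp_exp \<rho>_def by (simp add: algebra_simps)
    also have "E Z0 * (exp (- t * Z0) * exp (\<rho> * z)) = M1 * exp (\<rho> * z)"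
      by (simp add: M1_def ac_simps)
    also have "\<dots> \<le> M1 * exp (- \<kappa> * \<bar>z\<bar>)"
    proof (intro mult_left_mono M10)
      have "z \<le> 0" using True Z0neg by simp
      hence "\<rho> * z \<le> \<kappa> * z" using rpos by (intro mult_right_mono_neg) (auto simp: \<kappa>_def)
      also have "\<kappa> * z = - \<kappa> * \<bar>z\<bar>" using \<open>z \<le> 0\<close> by simp
      finally show "exp (\<rho> * z) \<le> exp (- \<kappa> * \<bar>z\<bar>)" by simp
    qed
    also have "\<dots> \<le> M * exp (- \<kappa> * \<bar>z\<bar>)"
      using BE0 by (intro mult_right_mono) (auto simp: M_def)
    finally show ?thesis .
  next
    case False
    have "exp (c * z) * E z \<le> exp (c * z) * BE" using EB[of z] by (simp add: BE_def)
    also have "exp (c * z) \<le> exp ((c - \<kappa>) * Z0) * exp (- \<kappa> * \<bar>z\<bar>)"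
    proof -
      have "c * z \<le> (c - \<kappa>) * Z0 + - \<kappa> * \<bar>z\<bar>"
      proof (cases "z \<ge> 0")
        case True
        have "(c + \<kappa>) * z \<le> 0" using True by (intro mult_nonpos_nonneg) (auto simp: \<kappa>_def)
        moreover have "(c - \<kappa>) * Z0 \<ge> 0" using Z0neg c0 kpos by (intro mult_nonpos_nonpos) auto
        ultimately show ?thesis using True by (simp add: algebra_simps)
      next
        case F2: False
        have "(c - \<kappa>) * z \<le> (c - \<kappa>) * Z0" using False c0 kpos by (intro mult_left_mono_neg) auto
        thus ?thesis using F2 by (simp add: algebra_simps)
      qed
      thus ?thesis by (simp add: mult_exp_exp)
    qed
    hence "exp (c * z) * BE \<le> exp ((c - \<kappa>) * Z0) * exp (- \<kappa> * \<bar>z\<bar>) * BE"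
      using BE0 by (intro mult_right_mono) auto
    also have "\<dots> \<le> M * exp (- \<kappa> * \<bar>z\<bar>)"
      using M10 by (simp add: M_def algebra_simps)
    finally show ?thesis .
  qed
  define fp where "fp = (\<lambda>z. exp (c * z) * (p z)\<^sup>2)"
  define fq where "fq = (\<lambda>z. exp (c * z) * (q z)\<^sup>2)"
  have fpb: "fp z \<le> M / \<epsilon> * exp (- \<kappa> * \<bar>z\<bar>)" for z
  proof -
    have "\<epsilon> * fp z \<le> exp (c * z) * E z" unfolding fp_def E_def by (simp add: algebra_simps)
    also have "\<dots> \<le> M * exp (- \<kappa> * \<bar>z\<bar>)" by (rule Wb)
    finally show ?thesis using e0 by (simp add: field_simps)
  qed
  have fqb: "fq z \<le> M * exp (- \<kappa> * \<bar>z\<bar>)" for z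
  proof -
    have "fq z \<le> exp (c * z) * E z" unfolding fq_def E_def using e0 by (simp add: algebra_simps)
    also have "\<dots> \<le> M * exp (- \<kappa> * \<bar>z\<bar>)" by (rule Wb)
    finally show ?thesis .
  qed
  have fp0: "fp z \<ge> 0" "fq z \<ge> 0" for z by (auto simp: fp_def fq_def)
  have cfp: "continuous_on UNIV fp" "continuous_on UNIV fq"
    unfolding fp_def fq_def using cpo by (auto intro!: continuous_intros)
  have ie: "integrable lborel (\<lambda>z. exp (- \<kappa> * \<bar>z\<bar>))" by (rule integrable_exp_abs[OF kpos])
  have ifp: "integrable lborel fp"
  proof (rule Bochner_Integration.integrable_bound)
    show "integrable lborel (\<lambda>z. M / \<epsilon> * exp (- \<kappa> * \<bar>z\<bar>))"
      using ie by (rule Bochner_Integration.integrable_mult_right)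
    show "fp \<in> borel_measurable lborel" using cfp by (simp add: borel_measurable_continuous_onI)
    show "AE x in lborel. norm (fp x) \<le> norm (M / \<epsilon> * exp (- \<kappa> * \<bar>x\<bar>))"
    proof (rule AE_I2)
      fix x
      have "norm (fp x) = fp x" using fp0[of x] by simp
      also have "\<dots> \<le> M / \<epsilon> * exp (- \<kappa> * \<bar>x\<bar>)" by (rule fpb)
      also have "\<dots> \<le> norm (M / \<epsilon> * exp (- \<kappa> * \<bar>x\<bar>))" using e0 M0 by (simp add: abs_mult)
      finally show "norm (fp x) \<le> norm (M / \<epsilon> * exp (- \<kappa> * \<bar>x\<bar>))" .
    qed
  qed
  have ifq: "integrable lborel fq"
  proof (rule Bochner_Integration.integrable_bound)
    show "integrable lborel (\<lambda>z. M * exp (- \<kappa> * \<bar>z\<bar>))"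
      using ie by (rule Bochner_Integration.integrable_mult_right)
    show "fq \<in> borel_measurable lborel" using cfp by (simp add: borel_measurable_continuous_onI)
    show "AE x in lborel. norm (fq x) \<le> norm (M * exp (- \<kappa> * \<bar>x\<bar>))"
    proof (rule AE_I2)
      fix x
      have "norm (fq x) = fq x" using fp0[of x] by simp
      also have "\<dots> \<le> M * exp (- \<kappa> * \<bar>x\<bar>)" by (rule fqb)
      also have "\<dots> \<le> norm (M * exp (- \<kappa> * \<bar>x\<bar>))" by simp
      finally show "norm (fq x) \<le> norm (M * exp (- \<kappa> * \<bar>x\<bar>))" .
    qed
  qed
  define Kc where "Kc = c\<^sup>2 / 4"
  have Kc0: "Kc > 0" using c0 by (simp add: Kc_def)
  define f where "f = (\<lambda>z. Kc / 2 * fq z - \<epsilon>\<^sup>2 / (2 * Kc) * fp z)"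
  define \<Phi> where "\<Phi> = (\<lambda>z. exp (c * z) * (q z * q' z + c / 2 * (q z)\<^sup>2))"
  define \<Phi>' where "\<Phi>' = (\<lambda>z. exp (c * z) * ((q' z + c * q z / 2)\<^sup>2 + (c\<^sup>2 / 4 + \<epsilon> * \<gamma> + lam) * (q z)\<^sup>2
      - \<epsilon> * p z * q z))"
  have d\<Phi>: "(\<Phi> has_real_derivative \<Phi>' z) (at z)" for z
  proof -
    have "(\<Phi> has_real_derivative
        c * exp (c * z) * (q z * q' z + c / 2 * (q z)\<^sup>2)
        + exp (c * z) * (q' z * q' z + q z * q'' z + c / 2 * (2 * q z * q' z))) (at z)"
      unfolding \<Phi>_def using dq dq' by (auto intro!: derivative_eq_intros simp: power2_eq_square algebra_simps)
    moreover have "q'' z = lam * q z - \<epsilon> * p z + \<epsilon> * \<gamma> * q z - c * q' z" using eqq[of z] by simp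
    ultimately show ?thesis unfolding \<Phi>'_def by (simp add: power2_eq_square algebra_simps)
  qed
  have c\<Phi>': "continuous_on UNIV \<Phi>'"
    unfolding \<Phi>'_def using cpo by (auto intro!: continuous_intros)
  have cf: "continuous_on UNIV f" unfolding f_def using cfp Kc0 by (auto intro!: continuous_intros)
  have fle: "f z \<le> \<Phi>' z" for z
  proof -
    have sq: "Kc / 2 * (q z)\<^sup>2 - \<epsilon> * p z * q z + \<epsilon>\<^sup>2 / (2 * Kc) * (p z)\<^sup>2 = (Kc * q z - \<epsilon> * p z)\<^sup>2 / (2 * Kc)"
      using Kc0 by (simp add: field_simps power2_eq_square)
    have "\<Phi>' z - f z = exp (c * z) * ((q' z + c * q z / 2)\<^sup>2 + (\<epsilon> * \<gamma> + lam) * (q z)\<^sup>2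
        + (Kc / 2 * (q z)\<^sup>2 - \<epsilon> * p z * q z + \<epsilon>\<^sup>2 / (2 * Kc) * (p z)\<^sup>2))"
      unfolding \<Phi>'_def f_def fp_def fq_def Kc_def by (simp add: algebra_simps)
    also have "\<dots> \<ge> 0" unfolding sq using e0 g0 lam0 Kc0
      by (intro mult_nonneg_nonneg add_nonneg_nonneg) auto
    finally show ?thesis by simp
  qed
  have interval: "integral\<^sup>L lborel (\<lambda>x. indicator {A..B} x *\<^sub>R f x) \<le> \<Phi> B - \<Phi> A" if AB: "A \<le> B" for A B
  proof -
    have "integral\<^sup>L lborel (\<lambda>x. indicator {A..B} x *\<^sub>R f x) \<le> integral\<^sup>L lborel (\<lambda>x. indicator {A..B} x *\<^sub>R \<Phi>' x)"
    proof (rule integral_mono)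
      show "integrable lborel (\<lambda>x. indicator {A..B} x *\<^sub>R f x)"
        using borel_integrable_atLeastAtMost'[of A B f] cf unfolding set_integrable_def
        by (auto intro: continuous_on_subset)
      show "integrable lborel (\<lambda>x. indicator {A..B} x *\<^sub>R \<Phi>' x)"
        using borel_integrable_atLeastAtMost'[of A B \<Phi>'] c\<Phi>' unfolding set_integrable_def
        by (auto intro: continuous_on_subset)
      show "indicator {A..B} x *\<^sub>R f x \<le> indicator {A..B} x *\<^sub>R \<Phi>' x" for x
        using fle[of x] by (simp add: indicator_def)
    qed
    also have "\<dots> = \<Phi> B - \<Phi> A"
    proof (rule integral_FTC_atLeastAtMost[OF AB])
      show "(\<Phi> has_vector_derivative \<Phi>' x) (at x within {A..B})" for x
        using d\<Phi>[of x] by (simp add: has_real_derivative_iff_has_vector_derivative has_vector_derivative_at_within)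
      show "continuous_on {A..B} \<Phi>'" using c\<Phi>' by (auto intro: continuous_on_subset)
    qed
    finally show ?thesis .
  qed
  define F where "F = (\<lambda>z. exp (c * z) * (q z)\<^sup>2)"
  have dF: "(F has_real_derivative 2 * \<Phi> z) (at z)" for z
    unfolding F_def \<Phi>_def using dq by (auto intro!: derivative_eq_intros simp: algebra_simps power2_eq_square)
  have Fb: "\<bar>F z\<bar> \<le> M * exp (- \<kappa> * \<bar>z\<bar>)" for z
    using fqb[of z] fp0(2)[of z] by (simp add: F_def fq_def)
  have exA: "\<exists>\<xi>. - real n - 1 < \<xi> \<and> \<xi> < - real n \<and> F (- real n) - F (- real n - 1) = (- real n - (- real n - 1)) * (2 * \<Phi> \<xi>)" for n
    by (rule MVT2) (auto intro: dF)
  have exB: "\<exists>\<xi>. real n < \<xi> \<and> \<xi> < real n + 1 \<and> F (real n + 1) - F (real n) = (real n + 1 - real n) * (2 * \<Phi> \<xi>)" for n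
    by (rule MVT2) (auto intro: dF)
  obtain A where A: "\<And>n. - real n - 1 < A n \<and> A n < - real n \<and> F (- real n) - F (- real n - 1) = (- real n - (- real n - 1)) * (2 * \<Phi> (A n))"
    using exA by metis
  obtain B where B: "\<And>n. real n < B n \<and> B n < real n + 1 \<and> F (real n + 1) - F (real n) = (real n + 1 - real n) * (2 * \<Phi> (B n))"
    using exB by metis
  have ebound: "M * exp (- \<kappa> * \<bar>x\<bar>) \<le> M * exp (- \<kappa> * real n)" if "\<bar>x\<bar> \<ge> real n" for x n
    using that kpos M0 by (intro mult_left_mono) auto
  have PhiA: "\<bar>\<Phi> (A n)\<bar> \<le> M * exp (- \<kappa> * real n)" for n
  proof -
    have "2 * \<Phi> (A n) = F (- real n) - F (- real n - 1)" using A[of n] by simp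
    moreover have "\<bar>F (- real n)\<bar> \<le> M * exp (- \<kappa> * real n)"
      using Fb[of "- real n"] ebound[of n "- real n"] by simp
    moreover have "\<bar>F (- real n - 1)\<bar> \<le> M * exp (- \<kappa> * real n)"
      using Fb[of "- real n - 1"] ebound[of n "- real n - 1"] by simp
    ultimately show ?thesis by linarith
  qed
  have PhiB: "\<bar>\<Phi> (B n)\<bar> \<le> M * exp (- \<kappa> * real n)" for n
  proof -
    have "2 * \<Phi> (B n) = F (real n + 1) - F (real n)" using B[of n] by simp
    moreover have "\<bar>F (real n)\<bar> \<le> M * exp (- \<kappa> * real n)"
      using Fb[of "real n"] ebound[of n "real n"] by simp
    moreover have "\<bar>F (real n + 1)\<bar> \<le> M * exp (- \<kappa> * real n)"
      using Fb[of "real n + 1"] ebound[of n "real n + 1"] by simp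
    ultimately show ?thesis by linarith
  qed
  have lim0: "(\<lambda>n. \<Phi> (B n) - \<Phi> (A n)) \<longlonglongrightarrow> 0"
  proof (rule Lim_null_comparison)
    show "\<forall>\<^sub>F n in sequentially. norm (\<Phi> (B n) - \<Phi> (A n)) \<le> 2 * M * exp (- \<kappa> * real n)"
    proof (intro always_eventually allI)
      fix n
      show "norm (\<Phi> (B n) - \<Phi> (A n)) \<le> 2 * M * exp (- \<kappa> * real n)"
        using PhiA[of n] PhiB[of n] by simp
    qed
    show "(\<lambda>n. 2 * M * exp (- \<kappa> * real n)) \<longlonglongrightarrow> 0" using kpos by real_asymp
  qed
  have iff: "integrable lborel f" unfolding f_def using ifp ifq by auto
  have mf: "f \<in> borel_measurable lborel" using cf by (simp add: borel_measurable_continuous_onI)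
  have limI: "(\<lambda>n. integral\<^sup>L lborel (\<lambda>x. indicator {A n..B n} x *\<^sub>R f x)) \<longlonglongrightarrow> integral\<^sup>L lborel f"
  proof (rule integral_dominated_convergence[where w = "\<lambda>x. \<bar>f x\<bar>"])
    show "f \<in> borel_measurable lborel" by (rule mf)
    show "(\<lambda>x. indicator {A n..B n} x *\<^sub>R f x) \<in> borel_measurable lborel" for n
      using mf by (intro borel_measurable_scaleR borel_measurable_indicator) auto
    show "integrable lborel (\<lambda>x. \<bar>f x\<bar>)" using iff by auto
    show "AE x in lborel. (\<lambda>n. indicator {A n..B n} x *\<^sub>R f x) \<longlonglongrightarrow> f x"
    proof (rule AE_I2, rule tendsto_eventually)
      fix x :: real
      show "\<forall>\<^sub>F n in sequentially. indicator {A n..B n} x *\<^sub>R f x = f x"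
        unfolding eventually_sequentially
      proof (intro exI allI impI)
        fix n assume "nat \<lceil>\<bar>x\<bar>\<rceil> \<le> n"
        hence "\<bar>x\<bar> \<le> real n" by linarith
        hence "x \<in> {A n..B n}" using A[of n] B[of n] by auto
        thus "indicator {A n..B n} x *\<^sub>R f x = f x" by simp
      qed
    qed
    show "AE x in lborel. norm (indicator {A n..B n} x *\<^sub>R f x) \<le> \<bar>f x\<bar>" for n
      by (rule AE_I2) (simp add: indicator_def)
  qed
  have fneg: "integral\<^sup>L lborel f \<le> 0"
  proof (rule LIMSEQ_le[OF limI lim0])
    show "\<exists>N. \<forall>n\<ge>N. integral\<^sup>L lborel (\<lambda>x. indicator {A n..B n} x *\<^sub>R f x) \<le> \<Phi> (B n) - \<Phi> (A n)"
    proof (intro exI allI impI)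
      fix n :: nat
      have "A n < - real n" "real n < B n" using A[of n] B[of n] by blast+
      hence "A n \<le> B n" by linarith
      thus "integral\<^sup>L lborel (\<lambda>x. indicator {A n..B n} x *\<^sub>R f x) \<le> \<Phi> (B n) - \<Phi> (A n)"
        by (rule interval)
    qed
  qed
  define P where "P = integral\<^sup>L lborel fp"
  define Q where "Q = integral\<^sup>L lborel fq"
  have fint: "integral\<^sup>L lborel f = Kc / 2 * Q - \<epsilon>\<^sup>2 / (2 * Kc) * P"
    unfolding f_def P_def Q_def using ifp ifq by simp
  have QP: "Q \<le> \<epsilon>\<^sup>2 / Kc\<^sup>2 * P"
  proof -
    have "Kc / 2 * Q \<le> \<epsilon>\<^sup>2 / (2 * Kc) * P" using fneg fint by simp
    hence "Kc * Kc * Q \<le> \<epsilon>\<^sup>2 * P" using Kc0 by (simp add: field_simps)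
    thus ?thesis using Kc0 by (simp add: field_simps power2_eq_square)
  qed
  have Q0: "Q \<ge> 0" unfolding Q_def using fp0 by simp
  have Ppos: "P > 0"
  proof -
    obtain z0 where z0: "p z0 \<noteq> 0 \<or> q z0 \<noteq> 0" using nz by blast
    show ?thesis
    proof (cases "p z0 \<noteq> 0")
      case True
      hence "fp z0 > 0" by (simp add: fp_def)
      thus ?thesis unfolding P_def using integral_pos_cont[OF cfp(1) fp0(1) ifp] by blast
    next
      case False
      hence "q z0 \<noteq> 0" using z0 by simp
      hence "fq z0 > 0" by (simp add: fq_def)
      hence "Q > 0" unfolding Q_def using integral_pos_cont[OF cfp(2) fp0(2) ifq] by blast
      hence "\<epsilon>\<^sup>2 / Kc\<^sup>2 * P > 0" using QP by linarith
      thus ?thesis using e0 Kc0 by (simp add: zero_less_mult_iff zero_less_divide_iff)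
    qed
  qed
  have "(\<integral>z. exp (c * z) * ((p z)\<^sup>2 - (q z)\<^sup>2 / \<epsilon>) \<partial>lborel) = integral\<^sup>L lborel (\<lambda>z. fp z - fq z / \<epsilon>)"
    unfolding fp_def fq_def by (simp add: algebra_simps)
  also have "\<dots> = P - Q / \<epsilon>" unfolding P_def Q_def using ifp ifq by simp
  also have "P - Q / \<epsilon> \<ge> P - \<epsilon> / Kc\<^sup>2 * P"
  proof -
    have "Q / \<epsilon> \<le> \<epsilon>\<^sup>2 / Kc\<^sup>2 * P / \<epsilon>" using divide_right_mono[OF QP, of \<epsilon>] e0 by simp
    also have "\<dots> = \<epsilon> / Kc\<^sup>2 * P" using e0 by (simp add: power2_eq_square)
    finally show ?thesis by simp
  qed
  moreover have "P - \<epsilon> / Kc\<^sup>2 * P > 0"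
  proof -
    have "Kc\<^sup>2 = c ^ 4 / 16" by (simp add: Kc_def power2_eq_square power4_eq_xxxx)
    hence "\<epsilon> / Kc\<^sup>2 < 1" using esmall e0 Kc0 by simp
    hence "\<epsilon> / Kc\<^sup>2 * P < 1 * P" using Ppos by (intro mult_strict_right_mono) auto
    thus ?thesis by simp
  qed
  ultimately show ?thesis by linarith
qed


end
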